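(* Let $\mathbf R_s\in\mathcal R([e,\ell];\theta_s)$ for all $s\in\mathcal S$. Consider the mixed-integer linear program: minimize $\delta$ over $\delta\ge 0$, $\bm a_s\in\mathcal X(\mathbf R_s,[e,\ell];\theta_s)$ ($s\in\mathcal S$), and, for each $i\in V_{\mathrm{disc}}$, variables $\bar\mu_i,\underline\mu_i\ge0$ and $z_{ib}\in\{0,1\}$ ($b=1,\dots,N_i$), subject to: $\sum_{b=1}^{N_i}z_{ib}=1$ for each $i\in V_{\mathrm{disc}}$; for all $i\in V_{\mathrm{disc}}$, $s\in\mathcal S$, $b\in\{1,\dots,N_i\}$: $z_{ib}=1\Rightarrow \bar\mu_i\ge a_{si}-\bar y_{ib}$ and $z_{ib}=1\Rightarrow\underline\mu_i\ge \underline y_{ib}-a_{si}$; $\delta\ge a_{s_1i}-a_{s_2i}-w_i$ for all $i\in V_{\mathrm{cont}}$ and $(s_1,s_2)\in\mathcal S\times\mathcal S$; and $\delta\ge\sum_{i\in V_{\mathrm{disc}}}(\bar\mu_i+\underline\mu_i)$. Then this problem attains its minimum, and its optimal value equals $0$ if and only if there exist $\bm a_s\in\mathcal X(\mathbf R_s,[e,\ell];\theta_s)$, $s\in\mathcal S$, satisfying: (i) for every $i\in V_{\mathrm{cont}}$ and $\beta\in\mathbb R$: either $a_{si}\le\beta+w_i/2$ for all $s$, or $a_{si}\ge\beta-w_i/2$ for all $s$; and (ii) for every $i\in V_{\mathrm{disc}}$ and $b\in\{1,\dots,N_i-1\}$: either $a_{si}\le\bar y_{ib}$ for all $s$, or $a_{si}\ge\underline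 y_{i,b+1}$ for all $s$.
   Context: Let $G=(V,A)$ be a directed graph with $V=\{0,1,\dots,n\}$; node $0$ is the depot and $V_C=V\setminus\{0\}$ is the set of customers. The depot has operating window $[e_0,\ell_0]$, vehicles have capacity $Q$, and each customer $i\in V_C$ has an exogenous time window $[e_i,\ell_i]$. A vector of operational parameters $\theta$ consists of arc costs $c_{ij}\ge 0$ and arc travel times $t_{ij}\ge0$ for $(i,j)\in A$, and demands $q_i\ge 0$ and service times $u_i\ge 0$ for $i\in V_C$. The customer set is partitioned as $V_C=V_{\mathrm{cont}}\cup V_{\mathrm{disc}}$ (disjoint). For $i\in V_{\mathrm{cont}}$ a width $w_i\ge0$ with $e_i\le \ell_i-w_i$ is given and $TW_i=\{[y,y+w_i]: e_i\le y\le \ell_i-w_i\}$. For $i\in V_{\mathrm{disc}}$, $TW_i=\{[\underline y_{i1},\bar y_{i1}],\dots,[\underline y_{iN_i},\bar y_{iN_i}]\}$ is a finite set of intervals with $\underline y_{ib}\le\bar y_{ib}$, none contained in another, ordered so that $e_i=\underline y_{i1}<\dots<\underline y_{iN_i}$ and $\bar y_{i1}<\dots<\bar y_{iN_i}=\ell_i$. A route set $\mathbf R=(R_1,\dots,R_m)$ is a collection of pairwise disjoint nonempty sequences $R_k=(R_{k,1},\dots,R_{k,n_k})$ of distinct customers (every customer with positive demand appearing in exactly one sequence). For a vector $\tau=(\tau_1,\dots,\tau_n)$ of closed intervals, $\mathcal X(\mathbf R,\tau;\theta)$ is the set of $\bm a\in\mathbb R^n_{\ge0}$ with: $a_{R_{k,1}}\ge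 e_0+t_{0,R_{k,1}}$ for all $k$; $a_{R_{k,l+1}}-a_{R_{k,l}}\ge t_{R_{k,l},R_{k,l+1}}+u_{R_{k,l}}$ for all $k$ and $1\le l\le n_k-1$; $a_{R_{k,n_k}}\le \ell_0-t_{R_{k,n_k},0}-u_{R_{k,n_k}}$ for all $k$; and $a_i\in\tau_i$ for all $i\in V_C$. We write $\mathbf R\in\mathcal R(\tau;\theta)$ if $\sum_{i\in R_k}q_i\le Q$ for every $k$ and $\mathcal X(\mathbf R,\tau;\theta)\neq\emptyset$. Finitely many scenarios $\theta_1,\dots,\theta_S$ are given, $\mathcal S=\{1,\dots,S\}$. $[e,\ell]$ denotes the vector $([e_1,\ell_1],\dots,[e_n,\ell_n])$, and $a_{si}$ denotes the $i$-th component of $\bm a_s$. *)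

theory Defs
  imports Complex_Main
begin

text \<open>Operational parameters theta of one scenario: arc costs c, arc travel times t,
  demands q, service times u.  Node 0 is the depot, customers are 1..n.\<close>
record vrp_params =
  arc_cost :: "nat \<Rightarrow> nat \<Rightarrow> real"
  travel   :: "nat \<Rightarrow> nat \<Rightarrow> real"
  demand   :: "nat \<Rightarrow> real"
  service  :: "nat \<Rightarrow> real"

text \<open>Scenario-independent instance data.  For discrete customers i, the candidate
  windows are [ylo i b, yhi i b] for b = 1..nwin i.\<close>
record vrp_inst =
  ncust   :: nat
  depot_e :: real
  depot_l :: real
  cap     :: real
  tw_e    :: "nat \<Rightarrow> real"
  tw_l    :: "nat \<Rightarrow> real"
  Vcont   :: "nat set"
  Vdisc   :: "nat set"
  width   :: "nat \<Rightarrow> real"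
  nwin    :: "nat \<Rightarrow> nat"
  ylo     :: "nat \<Rightarrow> nat \<Rightarrow> real"
  yhi     :: "nat \<Rightarrow> nat \<Rightarrow> real"

definition customers :: "vrp_inst \<Rightarrow> nat set" where
  "customers I = {1..ncust I}"

definition wf_inst :: "vrp_inst \<Rightarrow> bool" where
  "wf_inst I \<longleftrightarrow>
     Vcont I \<inter> Vdisc I = {} \<and> Vcont I \<union> Vdisc I = customers I \<and>
     (\<forall>i\<in>Vcont I. 0 \<le> width I i \<and> tw_e I i \<le> tw_l I i - width I i) \<and>
     (\<forall>i\<in>Vdisc I. 1 \<le> nwin I i \<and>
        (\<forall>b\<in>{1..nwin I i}. ylo I i b \<le> yhi I i b) \<and>
        (\<forall>b\<in>{1..<nwin I i}. ylo I i b < ylo I i (b+1) \<and> yhi I i b < yhi I i (b+1)) \<and>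
        (\<forall>b\<in>{1..nwin I i}. \<forall>b'\<in>{1..nwin I i}. b \<noteq> b' \<longrightarrow>
            \<not> {ylo I i b .. yhi I i b} \<subseteq> {ylo I i b' .. yhi I i b'}) \<and>
        tw_e I i = ylo I i 1 \<and> yhi I i (nwin I i) = tw_l I i)"

definition params_ok :: "vrp_inst \<Rightarrow> vrp_params \<Rightarrow> bool" where
  "params_ok I th \<longleftrightarrow>
     (\<forall>i\<le>ncust I. \<forall>j\<le>ncust I. i \<noteq> j \<longrightarrow> 0 \<le> arc_cost th i j \<and> 0 \<le> travel th i j) \<and>
     (\<forall>i\<in>customers I. 0 \<le> demand th i \<and> 0 \<le> service th i)"

definition route_set :: "vrp_inst \<Rightarrow> vrp_params \<Rightarrow> nat list list \<Rightarrow> bool" where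
  "route_set I th R \<longleftrightarrow>
     (\<forall>r\<in>set R. r \<noteq> [] \<and> distinct r \<and> set r \<subseteq> customers I) \<and>
     (\<forall>k<length R. \<forall>k'<length R. k \<noteq> k' \<longrightarrow> set (R!k) \<inter> set (R!k') = {}) \<and>
     (\<forall>i\<in>customers I. 0 < demand th i \<longrightarrow> (\<exists>r\<in>set R. i \<in> set r))"

text \<open>The set X(R, tau; theta); tau_i = [lo i, hi i].  Arrival vectors are functions
  nat => real supported on the customers 1..n.\<close>
definition Xset :: "vrp_inst \<Rightarrow> vrp_params \<Rightarrow> nat list list \<Rightarrow>
                    (nat \<Rightarrow> real) \<Rightarrow> (nat \<Rightarrow> real) \<Rightarrow> (nat \<Rightarrow> real) set" where
  "Xset I th R lo hi = {a.
     (\<forall>i. i \<notin> customers I \<longrightarrow> a i = 0) \<and>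
     (\<forall>i\<in>customers I. 0 \<le> a i) \<and>
     (\<forall>r\<in>set R.
        depot_e I + travel th 0 (hd r) \<le> a (hd r) \<and>
        (\<forall>l. l + 1 < length r \<longrightarrow>
             travel th (r!l) (r!(l+1)) + service th (r!l) \<le> a (r!(l+1)) - a (r!l)) \<and>
        a (last r) \<le> depot_l I - travel th (last r) 0 - service th (last r)) \<and>
     (\<forall>i\<in>customers I. lo i \<le> a i \<and> a i \<le> hi i)}"

definition feasible_routes :: "vrp_inst \<Rightarrow> vrp_params \<Rightarrow> nat list list \<Rightarrow>
                    (nat \<Rightarrow> real) \<Rightarrow> (nat \<Rightarrow> real) \<Rightarrow> bool" where
  "feasible_routes I th R lo hi \<longleftrightarrow>
     route_set I th R \<and> (\<forall>r\<in>set R. (\<Sum>i\<in>set r. demand th i) \<le> cap I) \<and>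
     Xset I th R lo hi \<noteq> {}"

text \<open>Feasible set of the MILP; a point is (delta, a, mubar, mulow, z) with a s i = a_{si}.\<close>
definition milp_feasible :: "vrp_inst \<Rightarrow> nat \<Rightarrow> (nat \<Rightarrow> vrp_params) \<Rightarrow> (nat \<Rightarrow> nat list list) \<Rightarrow>
    (real \<times> (nat \<Rightarrow> nat \<Rightarrow> real) \<times> (nat \<Rightarrow> real) \<times> (nat \<Rightarrow> real) \<times> (nat \<Rightarrow> nat \<Rightarrow> real)) set" where
  "milp_feasible I S th R = {(d, a, mub, mul, z).
     0 \<le> d \<and>
     (\<forall>s\<in>{1..S}. a s \<in> Xset I (th s) (R s) (tw_e I) (tw_l I)) \<and>
     (\<forall>i\<in>Vdisc I. 0 \<le> mub i \<and> 0 \<le> mul i \<and>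
        (\<forall>b\<in>{1..nwin I i}. z i b \<in> {0, 1}) \<and>
        (\<Sum>b=1..nwin I i. z i b) = 1 \<and>
        (\<forall>s\<in>{1..S}. \<forall>b\<in>{1..nwin I i}.
            (z i b = 1 \<longrightarrow> a s i - yhi I i b \<le> mub i) \<and>
            (z i b = 1 \<longrightarrow> ylo I i b - a s i \<le> mul i))) \<and>
     (\<forall>i\<in>Vcont I. \<forall>s1\<in>{1..S}. \<forall>s2\<in>{1..S}. a s1 i - a s2 i - width I i \<le> d) \<and>
     (\<Sum>i\<in>Vdisc I. mub i + mul i) \<le> d}"

end

theory Submission
  imports Defs "HOL-Analysis.Analysis"
begin

lemma closed_const_imp: "(P \<Longrightarrow> closed {x. Q x}) \<Longrightarrow> closed {x. P \<longrightarrow> Q x}"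
  by (cases P) auto

lemma closed_Xset:
  "closed {b :: nat \<times> nat \<Rightarrow> real. (\<lambda>i. b (s,i)) \<in> Xset I th R lo hi}"
  unfolding Xset_def mem_Collect_eq Ball_def
  by (intro closed_Collect_conj closed_Collect_all closed_const_imp closed_Collect_le closed_Collect_eq
        continuous_intros continuous_on_product_coordinates)

lemma compact_box: "compact (Pi\<^sub>E UNIV (\<lambda>k. {lo k..hi k::real}))"
  using compactin_PiE[of "\<lambda>_. euclidean" UNIV "\<lambda>k. {lo k..hi k}"]
  by (simp add: euclidean_product_topology)

lemma cont_Max0:
  assumes "finite A" "\<And>x. x\<in>A \<Longrightarrow> continuous_on K (f x)"
  shows "continuous_on K (\<lambda>b. Max (insert (0::real) ((\<lambda>x. f x b) ` A)))"
  using assms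
proof (induction A rule: finite_induct)
  case empty
  then show ?case by simp
next
  case (insert x A)
  have e: "Max (insert (0::real) ((\<lambda>x. f x b) ` insert x A)) = max (f x b) (Max (insert (0::real) ((\<lambda>x. f x b) ` A)))" for b
    using insert.hyps by (cases "A = {}") (auto simp: max.left_commute max.commute)
  show ?case unfolding e
    by (intro continuous_on_max insert) auto
qed

definition MUf :: "vrp_inst \<Rightarrow> nat \<Rightarrow> (nat \<times> nat \<Rightarrow> real) \<Rightarrow> nat \<Rightarrow> nat \<Rightarrow> real" where
  "MUf I S b i k = Max (insert 0 ((\<lambda>s. b (s,i) - yhi I i k) ` {1..S}))"
definition MLf :: "vrp_inst \<Rightarrow> nat \<Rightarrow> (nat \<times> nat \<Rightarrow> real) \<Rightarrow> nat \<Rightarrow> nat \<Rightarrow> real" where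
  "MLf I S b i k = Max (insert 0 ((\<lambda>s. ylo I i k - b (s,i)) ` {1..S}))"
definition CONTf :: "vrp_inst \<Rightarrow> nat \<Rightarrow> (nat \<times> nat \<Rightarrow> real) \<Rightarrow> real" where
  "CONTf I S b = Max (insert 0 ((\<lambda>x. b (fst (snd x), fst x) - b (snd (snd x), fst x) - width I (fst x))
       ` (Vcont I \<times> {1..S} \<times> {1..S})))"
definition OBJ :: "vrp_inst \<Rightarrow> nat \<Rightarrow> (nat \<Rightarrow> nat) \<Rightarrow> (nat \<times> nat \<Rightarrow> real) \<Rightarrow> real" where
  "OBJ I S c b = max (CONTf I S b) (\<Sum>i\<in>Vdisc I. MUf I S b i (c i) + MLf I S b i (c i))"

lemma cont_OBJ:
  assumes "finite (Vcont I)"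
  shows "continuous_on UNIV (OBJ I S c)"
proof -
  have "continuous_on UNIV (CONTf I S)"
    unfolding CONTf_def
    by (rule cont_Max0[where f="\<lambda>x b. b (fst (snd x), fst x) - b (snd (snd x), fst x) - width I (fst x)"])
       (use assms in \<open>auto intro!: continuous_intros continuous_on_product_coordinates\<close>)
  moreover have "continuous_on UNIV (\<lambda>b. MUf I S b i k)" for i k
    unfolding MUf_def
    by (rule cont_Max0[where f="\<lambda>s b. b (s,i) - yhi I i k"])
       (auto intro!: continuous_intros continuous_on_product_coordinates)
  moreover have "continuous_on UNIV (\<lambda>b. MLf I S b i k)" for i k
    unfolding MLf_def
    by (rule cont_Max0[where f="\<lambda>s b. ylo I i k - b (s,i)"])
       (auto intro!: continuous_intros continuous_on_product_coordinates)
  ultimately show ?thesis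
    unfolding OBJ_def by (intro continuous_intros) auto
qed

lemma mono_step:
  fixes f :: "nat \<Rightarrow> real"
  assumes "\<forall>b\<in>{1..<N}. f b < f (b+1)" "1 \<le> j" "j \<le> k" "k \<le> N"
  shows "f j \<le> f k"
  using assms(3,4)
proof (induction k)
  case 0 then show ?case by simp
next
  case (Suc k)
  show ?case
  proof (cases "j = Suc k")
    case False
    then have "j \<le> k" using Suc.prems by simp
    then have "f j \<le> f k" using Suc by simp
    moreover have "f k < f (Suc k)" using assms(1) Suc.prems \<open>j \<le> k\<close> assms(2) by auto
    ultimately show ?thesis by simp
  qed simp
qed

lemma Max0_ge: "finite A \<Longrightarrow> x \<in> A \<Longrightarrow> (x::real) \<le> Max (insert 0 A)"
  by simp
lemma Max0_nonneg: "finite A \<Longrightarrow> (0::real) \<le> Max (insert 0 A)"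
  by simp
lemma Max0_le: "finite A \<Longrightarrow> 0 \<le> d \<Longrightarrow> (\<And>x. x \<in> A \<Longrightarrow> x \<le> d) \<Longrightarrow> Max (insert (0::real) A) \<le> d"
  by simp

lemma attain:
  assumes wf: "wf_inst I"
    and fr: "\<forall>s\<in>{1..S}. feasible_routes I (th s) (R s) (tw_e I) (tw_l I)"
  shows "\<exists>p\<in>milp_feasible I S th R. \<forall>q\<in>milp_feasible I S th R. fst p \<le> fst q"
proof -
  let ?C = "customers I"
  have finC: "finite ?C" by (simp add: customers_def)
  have finV: "finite (Vcont I)" "finite (Vdisc I)" and VdC: "Vdisc I \<subseteq> ?C"
    using wf finC unfolding wf_inst_def by (auto intro: finite_subset)
  define K where "K = {b :: nat \<times> nat \<Rightarrow> real.
     (\<forall>s. s \<in> {1..S} \<longrightarrow> (\<lambda>i. b (s,i)) \<in> Xset I (th s) (R s) (tw_e I) (tw_l I)) \<and>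
     (\<forall>s. s \<notin> {1..S} \<longrightarrow> (\<forall>i. b (s,i) = 0))}"
  define box where "box k = (if fst k \<in> {1..S} \<and> snd k \<in> ?C then {tw_e I (snd k)..tw_l I (snd k)} else {0::real})" for k
  have box': "box k = {(\<lambda>k. if fst k \<in> {1..S} \<and> snd k \<in> ?C then tw_e I (snd k) else 0) k ..
      (\<lambda>k. if fst k \<in> {1..S} \<and> snd k \<in> ?C then tw_l I (snd k) else 0) k}" for k
    by (simp add: box_def)
  have Ksub: "K \<subseteq> Pi\<^sub>E UNIV box"
  proof
    fix b assume "b \<in> K"
    show "b \<in> Pi\<^sub>E UNIV box"
    proof (simp add: PiE_iff, intro allI)
      fix k :: "nat \<times> nat"
      obtain s i where k: "k = (s,i)" by fastforce
      show "b k \<in> box k"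
        using \<open>b \<in> K\<close> unfolding K_def box_def k Xset_def by (cases "s \<in> {1..S}") auto
    qed
  qed
  have clK: "closed K"
    unfolding K_def
    by (intro closed_Collect_conj closed_Collect_all closed_const_imp closed_Xset closed_Collect_eq
        continuous_intros continuous_on_product_coordinates)
  have cK: "compact K"
  proof -
    have "compact (Pi\<^sub>E UNIV box)" unfolding box' by (rule compact_box)
    then have "compact (Pi\<^sub>E UNIV box \<inter> K)" using clK by blast
    moreover have "Pi\<^sub>E UNIV box \<inter> K = K" using Ksub by blast
    ultimately show ?thesis by simp
  qed
  define a0 where "a0 s = (SOME a. a \<in> Xset I (th s) (R s) (tw_e I) (tw_l I))" for s
  have a0: "a0 s \<in> Xset I (th s) (R s) (tw_e I) (tw_l I)" if "s \<in> {1..S}" for s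
    using fr that unfolding a0_def feasible_routes_def by (metis ex_in_conv someI_ex)
  define b0 where "b0 k = (if fst k \<in> {1..S} then a0 (fst k) (snd k) else 0)" for k
  have "b0 \<in> K" unfolding K_def b0_def using a0 by auto
  then have Kne: "K \<noteq> {}" by blast
  define CH where "CH = Pi\<^sub>E (Vdisc I) (\<lambda>i. {1..nwin I i})"
  have finCH: "finite CH" unfolding CH_def using finV by (simp add: finite_PiE)
  have "(\<lambda>i. if i \<in> Vdisc I then 1 else undefined) \<in> CH"
    using wf unfolding CH_def wf_inst_def by auto
  then have CHne: "CH \<noteq> {}" by blast
  have "\<exists>b\<in>K. \<forall>b'\<in>K. OBJ I S c b \<le> OBJ I S c b'" for c
    by (rule continuous_attains_inf[OF cK Kne]) (rule continuous_on_subset[OF cont_OBJ[OF finV(1)]], simp)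
  then obtain bc where bc: "\<And>c. bc c \<in> K" "\<And>c b'. b' \<in> K \<Longrightarrow> OBJ I S c (bc c) \<le> OBJ I S c b'"
    by metis
  define g where "g c = OBJ I S c (bc c)" for c
  define m where "m = Min (g ` CH)"
  have "m \<in> g ` CH" unfolding m_def using finCH CHne by simp
  then obtain cs where cs: "cs \<in> CH" "g cs = m" by auto
  have csmin: "g cs \<le> g c" if "c \<in> CH" for c
    using cs finCH that unfolding m_def by simp
  define bs where "bs = bc cs"
  have bsK: "bs \<in> K" unfolding bs_def by (rule bc)
  define p where "p = (OBJ I S cs bs, (\<lambda>s i. bs (s,i)), (\<lambda>i. MUf I S bs i (cs i)), (\<lambda>i. MLf I S bs i (cs i)),
                        (\<lambda>i k. if k = cs i then 1 else 0 :: real))"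
  have finA: "finite (Vcont I \<times> {1..S} \<times> {1..S})" using finV by simp
  have CONT0: "0 \<le> CONTf I S b" for b unfolding CONTf_def using finA by simp
  have f1: "0 \<le> OBJ I S cs bs" unfolding OBJ_def using CONT0[of bs] by simp
  have f2: "\<forall>s\<in>{1..S}. (\<lambda>i. bs (s,i)) \<in> Xset I (th s) (R s) (tw_e I) (tw_l I)" using bsK unfolding K_def by auto
  have f3: "0 \<le> MUf I S bs i (cs i) \<and> 0 \<le> MLf I S bs i (cs i) \<and>
      (\<forall>b\<in>{1..nwin I i}. (if b = cs i then 1 else 0::real) \<in> {0, 1}) \<and>
      (\<Sum>b = 1..nwin I i. if b = cs i then 1 else 0::real) = 1 \<and>
      (\<forall>s\<in>{1..S}. \<forall>b\<in>{1..nwin I i}.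
       ((if b = cs i then 1 else 0::real) = 1 \<longrightarrow> bs (s, i) - yhi I i b \<le> MUf I S bs i (cs i)) \<and>
       ((if b = cs i then 1 else 0::real) = 1 \<longrightarrow> ylo I i b - bs (s, i) \<le> MLf I S bs i (cs i)))"
    if i: "i \<in> Vdisc I" for i
  proof -
    have ci: "cs i \<in> {1..nwin I i}" using cs(1) i unfolding CH_def by auto
    have u: "bs (s, i) - yhi I i (cs i) \<le> MUf I S bs i (cs i)" if "s \<in> {1..S}" for s
      unfolding MUf_def using that by (intro Max0_ge) auto
    have l: "ylo I i (cs i) - bs (s, i) \<le> MLf I S bs i (cs i)" if "s \<in> {1..S}" for s
      unfolding MLf_def using that by (intro Max0_ge) auto
    have "0 \<le> MUf I S bs i (cs i)" "0 \<le> MLf I S bs i (cs i)" unfolding MUf_def MLf_def by simp_all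
    then show ?thesis using ci u l by (auto simp: sum.delta)
  qed
  have f4: "bs (s1,i) - bs (s2,i) - width I i \<le> OBJ I S cs bs"
    if "i \<in> Vcont I" "s1 \<in> {1..S}" "s2 \<in> {1..S}" for i s1 s2
  proof -
    have "bs (s1,i) - bs (s2,i) - width I i \<le> CONTf I S bs"
      unfolding CONTf_def using finA that by (intro Max0_ge) force+
    then show ?thesis unfolding OBJ_def by simp
  qed
  have f5: "(\<Sum>i\<in>Vdisc I. MUf I S bs i (cs i) + MLf I S bs i (cs i)) \<le> OBJ I S cs bs"
    unfolding OBJ_def by simp
  have "p \<in> milp_feasible I S th R"
    unfolding p_def milp_feasible_def mem_Collect_eq case_prod_conv
    using f1 f2 f3 f4 f5 by blast
  moreover have "fst p \<le> fst q" if q: "q \<in> milp_feasible I S th R" for q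
  proof -
    obtain d a mub mul z where qd: "q = (d, a, mub, mul, z)" by (cases q) auto
    note qf = q[unfolded qd milp_feasible_def mem_Collect_eq case_prod_conv]
    have ex1: "\<exists>k. k \<in> {1..nwin I i} \<and> z i k = 1" if i: "i \<in> Vdisc I" for i
    proof (rule ccontr)
      assume "\<not> ?thesis"
      then have "\<forall>k\<in>{1..nwin I i}. z i k = 0" using qf i by auto
      then have "(\<Sum>b=1..nwin I i. z i b) = 0" by simp
      then show False using qf i by auto
    qed
    define c where "c i = (if i \<in> Vdisc I then (SOME k. k \<in> {1..nwin I i} \<and> z i k = 1) else undefined)" for i
    have c: "c i \<in> {1..nwin I i} \<and> z i (c i) = 1" if "i \<in> Vdisc I" for i
      using someI_ex[OF ex1[OF that]] that unfolding c_def by simp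
    have cCH: "c \<in> CH" unfolding CH_def using c by (auto simp: c_def)
    define b' where "b' k = (if fst k \<in> {1..S} then a (fst k) (snd k) else 0)" for k
    have b'K: "b' \<in> K" unfolding K_def b'_def using qf by auto
    have d0: "0 \<le> d" using qf by simp
    have "CONTf I S b' \<le> d"
      unfolding CONTf_def using finA d0 qf by (intro Max0_le) (auto simp: b'_def)
    moreover have "MUf I S b' i (c i) \<le> mub i" if "i \<in> Vdisc I" for i
      unfolding MUf_def using qf c[OF that] that by (intro Max0_le) (auto simp: b'_def)
    moreover have "MLf I S b' i (c i) \<le> mul i" if "i \<in> Vdisc I" for i
      unfolding MLf_def using qf c[OF that] that by (intro Max0_le) (auto simp: b'_def)
    ultimately have "OBJ I S c b' \<le> d"
      unfolding OBJ_def using qf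
      by (smt (verit, best) sum_mono)
    moreover have "g cs \<le> g c" using csmin cCH by simp
    moreover have "g c \<le> OBJ I S c b'" unfolding g_def using bc(2) b'K by simp
    ultimately show ?thesis unfolding qd p_def g_def bs_def by simp
  qed
  ultimately show ?thesis by blast
qed

theorem mainTheorem3:
  fixes I :: vrp_inst and S :: nat and th :: "nat \<Rightarrow> vrp_params"
    and R :: "nat \<Rightarrow> nat list list"
  assumes "wf_inst I"
    and "\<forall>s\<in>{1..S}. params_ok I (th s)"
    and "\<forall>s\<in>{1..S}. feasible_routes I (th s) (R s) (tw_e I) (tw_l I)"
  shows "(\<exists>p\<in>milp_feasible I S th R. \<forall>q\<in>milp_feasible I S th R. fst p \<le> fst q) \<and>
    ((INF p\<in>milp_feasible I S th R. fst p) = 0 \<longleftrightarrow>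
     (\<exists>a :: nat \<Rightarrow> nat \<Rightarrow> real.
        (\<forall>s\<in>{1..S}. a s \<in> Xset I (th s) (R s) (tw_e I) (tw_l I)) \<and>
        (\<forall>i\<in>Vcont I. \<forall>\<beta>::real.
            (\<forall>s\<in>{1..S}. a s i \<le> \<beta> + width I i / 2) \<or>
            (\<forall>s\<in>{1..S}. \<beta> - width I i / 2 \<le> a s i)) \<and>
        (\<forall>i\<in>Vdisc I. \<forall>b\<in>{1..nwin I i - 1}.
            (\<forall>s\<in>{1..S}. a s i \<le> yhi I i b) \<or>
            (\<forall>s\<in>{1..S}. ylo I i (b+1) \<le> a s i))))"
proof -
  let ?M = "milp_feasible I S th R"
  obtain p where p: "p \<in> ?M" "\<forall>q\<in>?M. fst p \<le> fst q"
    using attain[OF assms(1) assms(3)] by blast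
  have INF: "(INF p\<in>?M. fst p) = fst p"
    unfolding image_def using p by (intro cInf_eq_minimum) auto
  obtain d a mub mul z where pd: "p = (d, a, mub, mul, z)" by (cases p) auto
  note pf = p(1)[unfolded pd milp_feasible_def mem_Collect_eq case_prod_conv]
  have pd0: "0 \<le> d" using pf[THEN conjunct1] .
  have pX: "\<forall>s\<in>{1..S}. a s \<in> Xset I (th s) (R s) (tw_e I) (tw_l I)" using pf[THEN conjunct2, THEN conjunct1] .
  have pD: "\<forall>i\<in>Vdisc I. 0 \<le> mub i \<and> 0 \<le> mul i \<and>
        (\<forall>b\<in>{1..nwin I i}. z i b \<in> {0, 1}) \<and>
        (\<Sum>b=1..nwin I i. z i b) = 1 \<and>
        (\<forall>s\<in>{1..S}. \<forall>b\<in>{1..nwin I i}.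
            (z i b = 1 \<longrightarrow> a s i - yhi I i b \<le> mub i) \<and>
            (z i b = 1 \<longrightarrow> ylo I i b - a s i \<le> mul i))"
    using pf[THEN conjunct2, THEN conjunct2, THEN conjunct1] .
  have pC: "\<forall>i\<in>Vcont I. \<forall>s1\<in>{1..S}. \<forall>s2\<in>{1..S}. a s1 i - a s2 i - width I i \<le> d"
    using pf[THEN conjunct2, THEN conjunct2, THEN conjunct2, THEN conjunct1] .
  have pS: "(\<Sum>i\<in>Vdisc I. mub i + mul i) \<le> d"
    using pf[THEN conjunct2, THEN conjunct2, THEN conjunct2, THEN conjunct2] .
  have finC: "finite (customers I)" by (simp add: customers_def)
  have finV: "finite (Vdisc I)" and VdC: "Vdisc I \<subseteq> customers I"
    using assms(1) finC unfolding wf_inst_def by (auto intro: finite_subset)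
  have wfd: "\<forall>i\<in>Vdisc I. 1 \<le> nwin I i \<and>
        (\<forall>b\<in>{1..<nwin I i}. ylo I i b < ylo I i (b+1) \<and> yhi I i b < yhi I i (b+1)) \<and>
        tw_e I i = ylo I i 1 \<and> yhi I i (nwin I i) = tw_l I i"
    using assms(1) unfolding wf_inst_def by blast
  have fwd: "\<exists>a :: nat \<Rightarrow> nat \<Rightarrow> real.
        (\<forall>s\<in>{1..S}. a s \<in> Xset I (th s) (R s) (tw_e I) (tw_l I)) \<and>
        (\<forall>i\<in>Vcont I. \<forall>\<beta>::real.
            (\<forall>s\<in>{1..S}. a s i \<le> \<beta> + width I i / 2) \<or>
            (\<forall>s\<in>{1..S}. \<beta> - width I i / 2 \<le> a s i)) \<and>
        (\<forall>i\<in>Vdisc I. \<forall>b\<in>{1..nwin I i - 1}.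
            (\<forall>s\<in>{1..S}. a s i \<le> yhi I i b) \<or>
            (\<forall>s\<in>{1..S}. ylo I i (b+1) \<le> a s i))" if d0: "d = 0"
  proof (intro exI conjI)
    show "\<forall>s\<in>{1..S}. a s \<in> Xset I (th s) (R s) (tw_e I) (tw_l I)" using pX .
    show "\<forall>i\<in>Vcont I. \<forall>\<beta>::real.
            (\<forall>s\<in>{1..S}. a s i \<le> \<beta> + width I i / 2) \<or>
            (\<forall>s\<in>{1..S}. \<beta> - width I i / 2 \<le> a s i)"
    proof (intro ballI allI)
      fix i \<beta> assume i: "i \<in> Vcont I"
      have sp: "a s1 i - a s2 i - width I i \<le> 0" if "s1 \<in> {1..S}" "s2 \<in> {1..S}" for s1 s2
        using pC i that d0 by blast
      show "(\<forall>s\<in>{1..S}. a s i \<le> \<beta> + width I i / 2) \<or> (\<forall>s\<in>{1..S}. \<beta> - width I i / 2 \<le> a s i)"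
      proof (rule disjCI)
        assume "\<not> (\<forall>s\<in>{1..S}. \<beta> - width I i / 2 \<le> a s i)"
        then obtain s2 where "s2 \<in> {1..S}" "a s2 i < \<beta> - width I i / 2" by force
        then show "\<forall>s\<in>{1..S}. a s i \<le> \<beta> + width I i / 2" using sp by force
      qed
    qed
    show "\<forall>i\<in>Vdisc I. \<forall>b\<in>{1..nwin I i - 1}.
            (\<forall>s\<in>{1..S}. a s i \<le> yhi I i b) \<or>
            (\<forall>s\<in>{1..S}. ylo I i (b+1) \<le> a s i)"
    proof (intro ballI)
      fix i b assume i: "i \<in> Vdisc I" and b: "b \<in> {1..nwin I i - 1}"
      have pDi: "0 \<le> mub j \<and> 0 \<le> mul j \<and>
        (\<forall>b\<in>{1..nwin I j}. z j b \<in> {0, 1}) \<and>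
        (\<Sum>b=1..nwin I j. z j b) = 1 \<and>
        (\<forall>s\<in>{1..S}. \<forall>b\<in>{1..nwin I j}.
            (z j b = 1 \<longrightarrow> a s j - yhi I j b \<le> mub j) \<and>
            (z j b = 1 \<longrightarrow> ylo I j b - a s j \<le> mul j))" if "j \<in> Vdisc I" for j
        using pD that by (rule bspec)
      have nn: "\<forall>j\<in>Vdisc I. 0 \<le> mub j + mul j"
      proof
        fix j assume "j \<in> Vdisc I"
        from pDi[OF this] have "0 \<le> mub j" "0 \<le> mul j" by simp_all
        then show "0 \<le> mub j + mul j" by simp
      qed
      have "(\<Sum>j\<in>Vdisc I. mub j + mul j) \<le> 0" using pS d0 by simp
      moreover have "0 \<le> (\<Sum>j\<in>Vdisc I. mub j + mul j)" using nn by (simp add: sum_nonneg)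
      ultimately have "(\<Sum>j\<in>Vdisc I. mub j + mul j) = 0" by simp
      then have "\<forall>j\<in>Vdisc I. mub j + mul j = 0"
        using sum_nonneg_eq_0_iff[OF finV, of "\<lambda>j. mub j + mul j"] nn by simp
      then have "mub i + mul i = 0" using i by simp
      moreover have "0 \<le> mub i" "0 \<le> mul i" using pDi[OF i] by simp_all
      ultimately have m0: "mub i = 0" "mul i = 0" by linarith+
      have zi: "\<forall>k\<in>{1..nwin I i}. z i k \<in> {0, 1}" "(\<Sum>k=1..nwin I i. z i k) = 1"
        using pDi[OF i] by simp_all
      have "\<exists>k\<in>{1..nwin I i}. z i k = 1"
      proof (rule ccontr)
        assume "\<not> ?thesis"
        then have "\<forall>k\<in>{1..nwin I i}. z i k = 0" using zi(1) by auto
        then have "(\<Sum>k=1..nwin I i. z i k) = 0" by simp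
        then show False using zi(2) by simp
      qed
      then obtain k where k: "k \<in> {1..nwin I i}" "z i k = 1" by blast
      have ak: "a s i \<le> yhi I i k" "ylo I i k \<le> a s i" if "s \<in> {1..S}" for s
      proof -
        have "(z i k = 1 \<longrightarrow> a s i - yhi I i k \<le> mub i) \<and> (z i k = 1 \<longrightarrow> ylo I i k - a s i \<le> mul i)"
          using pDi[OF i] that k(1) by blast
        then show "a s i \<le> yhi I i k" "ylo I i k \<le> a s i" using k(2) m0 by simp_all
      qed
      have N: "1 \<le> nwin I i" "\<forall>b\<in>{1..<nwin I i}. ylo I i b < ylo I i (b+1)"
           "\<forall>b\<in>{1..<nwin I i}. yhi I i b < yhi I i (b+1)"
        using wfd i by blast+
      show "(\<forall>s\<in>{1..S}. a s i \<le> yhi I i b) \<or> (\<forall>s\<in>{1..S}. ylo I i (b+1) \<le> a s i)"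
      proof (cases "k \<le> b")
        case True
        have "yhi I i k \<le> yhi I i b"
          using mono_step[OF N(3)] True k b by auto
        then show ?thesis using ak by force
      next
        case False
        have "ylo I i (b+1) \<le> ylo I i k"
          using mono_step[OF N(2)] False k b by auto
        then show ?thesis using ak by force
      qed
    qed
  qed
  have bwd: "fst p = 0" if ex: "\<exists>a :: nat \<Rightarrow> nat \<Rightarrow> real.
        (\<forall>s\<in>{1..S}. a s \<in> Xset I (th s) (R s) (tw_e I) (tw_l I)) \<and>
        (\<forall>i\<in>Vcont I. \<forall>\<beta>::real.
            (\<forall>s\<in>{1..S}. a s i \<le> \<beta> + width I i / 2) \<or>
            (\<forall>s\<in>{1..S}. \<beta> - width I i / 2 \<le> a s i)) \<and>
        (\<forall>i\<in>Vdisc I. \<forall>b\<in>{1..nwin I i - 1}.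
            (\<forall>s\<in>{1..S}. a s i \<le> yhi I i b) \<or>
            (\<forall>s\<in>{1..S}. ylo I i (b+1) \<le> a s i))"
  proof -
    obtain x where x: "\<forall>s\<in>{1..S}. x s \<in> Xset I (th s) (R s) (tw_e I) (tw_l I)"
      "\<forall>i\<in>Vcont I. \<forall>\<beta>::real.
            (\<forall>s\<in>{1..S}. x s i \<le> \<beta> + width I i / 2) \<or>
            (\<forall>s\<in>{1..S}. \<beta> - width I i / 2 \<le> x s i)"
      "\<forall>i\<in>Vdisc I. \<forall>b\<in>{1..nwin I i - 1}.
            (\<forall>s\<in>{1..S}. x s i \<le> yhi I i b) \<or>
            (\<forall>s\<in>{1..S}. ylo I i (b+1) \<le> x s i)"
      using ex by blast
    define P where "P i b \<longleftrightarrow> 1 \<le> b \<and> (\<forall>s\<in>{1..S}. x s i \<le> yhi I i b)" for i b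
    define k where "k i = (LEAST b. P i b)" for i
    have kprop: "k i \<in> {1..nwin I i} \<and> (\<forall>s\<in>{1..S}. x s i \<le> yhi I i (k i) \<and> ylo I i (k i) \<le> x s i)"
      if i: "i \<in> Vdisc I" for i
    proof -
      have iC: "i \<in> customers I" using VdC i by blast
      have N: "1 \<le> nwin I i" "tw_e I i = ylo I i 1" "yhi I i (nwin I i) = tw_l I i"
        using wfd i by blast+
      have xr: "tw_e I i \<le> x s i \<and> x s i \<le> tw_l I i" if "s \<in> {1..S}" for s
        using x(1) that iC unfolding Xset_def by blast
      have PN: "P i (nwin I i)" unfolding P_def using N xr by auto
      have Pk: "P i (k i)" unfolding k_def by (rule LeastI[of "P i", OF PN])
      have kN: "k i \<le> nwin I i" unfolding k_def by (rule Least_le[of "P i", OF PN])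
      have lo: "ylo I i (k i) \<le> x s i" if s: "s \<in> {1..S}" for s
      proof (cases "k i = 1")
        case True then show ?thesis using xr[OF s] N by simp
      next
        case False
        then have k1: "k i - 1 \<in> {1..nwin I i - 1}" using Pk kN unfolding P_def by auto
        have lt: "k i - 1 < k i" using k1 by auto
        have "\<not> P i (k i - 1)" using lt not_less_Least[of "k i - 1" "P i"] by (simp add: k_def)
        then have "\<not> (\<forall>s\<in>{1..S}. x s i \<le> yhi I i (k i - 1))" using k1 unfolding P_def by auto
        then have "\<forall>s\<in>{1..S}. ylo I i (k i - 1 + 1) \<le> x s i" using x(3) i k1 by blast
        moreover have "k i - 1 + 1 = k i" using k1 by auto
        ultimately show ?thesis using s by simp
      qed
      show ?thesis using Pk kN lo unfolding P_def by auto
    qed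
    define q where "q = (0::real, x, (\<lambda>i::nat. 0::real), (\<lambda>i::nat. 0::real), (\<lambda>i b. if b = k i then 1 else 0::real))"
    have "q \<in> ?M"
    proof -
      have c1: "\<forall>i\<in>Vcont I. \<forall>s1\<in>{1..S}. \<forall>s2\<in>{1..S}. x s1 i - x s2 i - width I i \<le> 0"
      proof (intro ballI)
        fix i s1 s2 assume i: "i \<in> Vcont I" and "s1 \<in> {1..S}" "s2 \<in> {1..S}"
        then have "x s1 i \<le> (x s1 i + x s2 i)/2 + width I i / 2 \<or> (x s1 i + x s2 i)/2 - width I i / 2 \<le> x s2 i"
          using x(2) by blast
        then show "x s1 i - x s2 i - width I i \<le> 0" by argo
      qed
      have c2: "\<forall>i\<in>Vdisc I. (\<forall>b\<in>{1..nwin I i}. (if b = k i then 1 else 0::real) \<in> {0, 1}) \<and>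
          (\<Sum>b = 1..nwin I i. if b = k i then 1 else 0::real) = 1 \<and>
          (\<forall>s\<in>{1..S}. \<forall>b\<in>{1..nwin I i}.
            ((if b = k i then 1 else 0::real) = 1 \<longrightarrow> x s i - yhi I i b \<le> 0) \<and>
            ((if b = k i then 1 else 0::real) = 1 \<longrightarrow> ylo I i b - x s i \<le> 0))"
        using kprop by (auto simp: sum.delta)
      show ?thesis unfolding q_def milp_feasible_def mem_Collect_eq case_prod_conv
        using x(1) c1 c2 by auto
    qed
    then have "fst p \<le> 0" using p(2) unfolding q_def by force
    moreover have "0 \<le> fst p" using pd0 pd by simp
    ultimately show ?thesis by simp
  qed
  show ?thesis
  proof (intro conjI iffI)
    show "\<exists>p\<in>?M. \<forall>q\<in>?M. fst p \<le> fst q" using p by blast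
  next
    assume "(INF p\<in>?M. fst p) = 0"
    then have "d = 0" using INF pd by simp
    then show "\<exists>a :: nat \<Rightarrow> nat \<Rightarrow> real.
        (\<forall>s\<in>{1..S}. a s \<in> Xset I (th s) (R s) (tw_e I) (tw_l I)) \<and>
        (\<forall>i\<in>Vcont I. \<forall>\<beta>::real.
            (\<forall>s\<in>{1..S}. a s i \<le> \<beta> + width I i / 2) \<or>
            (\<forall>s\<in>{1..S}. \<beta> - width I i / 2 \<le> a s i)) \<and>
        (\<forall>i\<in>Vdisc I. \<forall>b\<in>{1..nwin I i - 1}.
            (\<forall>s\<in>{1..S}. a s i \<le> yhi I i b) \<or>
            (\<forall>s\<in>{1..S}. ylo I i (b+1) \<le> a s i))" by (rule fwd)
  next
    assume "\<exists>a :: nat \<Rightarrow> nat \<Rightarrow> real.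
        (\<forall>s\<in>{1..S}. a s \<in> Xset I (th s) (R s) (tw_e I) (tw_l I)) \<and>
        (\<forall>i\<in>Vcont I. \<forall>\<beta>::real.
            (\<forall>s\<in>{1..S}. a s i \<le> \<beta> + width I i / 2) \<or>
            (\<forall>s\<in>{1..S}. \<beta> - width I i / 2 \<le> a s i)) \<and>
        (\<forall>i\<in>Vdisc I. \<forall>b\<in>{1..nwin I i - 1}.
            (\<forall>s\<in>{1..S}. a s i \<le> yhi I i b) \<or>
            (\<forall>s\<in>{1..S}. ylo I i (b+1) \<le> a s i))"
    then have "fst p = 0" by (rule bwd)
    then show "(INF p\<in>?M. fst p) = 0" using INF by simp
  qed
qed

end
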